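(* Let $\sigma^{11},\sigma^{22}$ be sufficiently smooth functions on $\overline\Omega$ (say in $W^{3,\infty}(\Omega)$) and define, for $0\le i\le n_x-1$, $0\le j\le n_y-1$, $$\tilde\sigma^{kk}_{i+1/2,j+1/2}=\sigma^{kk}_{i+1/2,j+1/2}-\frac{h_{i+1/2}^2}{8}\Big(\frac{\partial^2\sigma^{kk}}{\partial x^2}\Big)_{i+1/2,j+1/2}-\frac{l_{j+1/2}^2}{8}\Big(\frac{\partial^2\sigma^{kk}}{\partial y^2}\Big)_{i+1/2,j+1/2},\quad k=1,2.$$ Then $$\Big(\frac{\partial\sigma^{11}}{\partial x}\Big)_{i,j+1/2}=[D_x\tilde\sigma^{11}]_{i,j+1/2}+\epsilon^x_{i,j+1/2}(\sigma^{11}),\quad 1\le i\le n_x-1,\ 0\le j\le n_y-1,$$ $$\Big(\frac{\partial\sigma^{22}}{\partial y}\Big)_{i+1/2,j}=[D_y\tilde\sigma^{22}]_{i+1/2,j}+\epsilon^y_{i+1/2,j}(\sigma^{22}),\quad 0\le i\le n_x-1,\ 1\le j\le n_y-1,$$ where $|\epsilon^x_{i,j+1/2}(\sigma^{11})|\le C(h^2+l^2)\|\sigma^{11}\|_{3,\infty}$ and $|\epsilon^y_{i+1/2,j}(\sigma^{22})|\le C(h^2+l^2)\|\sigma^{22}\|_{3,\infty}$ with $C$ an absolute constant independent of the grid.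
   Context: Grid on $\Omega=(0,a)\times(0,b)$: $0=x_0<\dots<x_{n_x}=a$, $0=y_0<\dots<y_{n_y}=b$, $x_{i+1/2}=(x_i+x_{i+1})/2$, $h_{i+1/2}=x_{i+1}-x_i$, $h_i=(h_{i-1/2}+h_{i+1/2})/2$, $h=\max_i h_{i+1/2}$; analogously $y_{j+1/2}$, $l_{j+1/2}=y_{j+1}-y_j$, $l_j=(l_{j-1/2}+l_{j+1/2})/2$, $l=\max_j l_{j+1/2}$. For a function $\phi$, $\phi_{\alpha,\beta}=\phi(x_\alpha,y_\beta)$. $[D_x\phi]_{i,m}=(\phi_{i+1/2,m}-\phi_{i-1/2,m})/h_i$, $[D_y\phi]_{k,j}=(\phi_{k,j+1/2}-\phi_{k,j-1/2})/l_j$ for interior indices. $\|\cdot\|_{3,\infty}$ denotes the $W^{3,\infty}(\Omega)$ norm (maximum of sup norms of all partial derivatives of order at most 3). *)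

theory Defs
  imports "HOL-Analysis.Analysis"
begin

datatype dir = Dx | Dy

definition pdx :: "(real \<times> real \<Rightarrow> real) \<Rightarrow> real \<times> real \<Rightarrow> real" where
  "pdx f = (\<lambda>p. deriv (\<lambda>t. f (t, snd p)) (fst p))"

definition pdy :: "(real \<times> real \<Rightarrow> real) \<Rightarrow> real \<times> real \<Rightarrow> real" where
  "pdy f = (\<lambda>p. deriv (\<lambda>t. f (fst p, t)) (snd p))"

fun dop :: "dir \<Rightarrow> (real \<times> real \<Rightarrow> real) \<Rightarrow> real \<times> real \<Rightarrow> real" where
  "dop Dx f = pdx f"
| "dop Dy f = pdy f"

fun pd :: "dir list \<Rightarrow> (real \<times> real \<Rightarrow> real) \<Rightarrow> real \<times> real \<Rightarrow> real" where
  "pd [] f = f"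
| "pd (d # w) f = dop d (pd w f)"

definition Omega :: "real \<Rightarrow> real \<Rightarrow> (real \<times> real) set" where
  "Omega a b = {0<..<a} \<times> {0<..<b}"

definition smooth3 :: "real \<Rightarrow> real \<Rightarrow> (real \<times> real \<Rightarrow> real) \<Rightarrow> bool" where
  "smooth3 a b f \<longleftrightarrow>
     (\<forall>w. length w \<le> 2 \<longrightarrow> (\<forall>p\<in>Omega a b. pd w f differentiable (at p))) \<and>
     (\<forall>w. length w \<le> 3 \<longrightarrow> continuous_on (Omega a b) (pd w f)) \<and>
     (\<forall>w. length w \<le> 3 \<longrightarrow> bounded (pd w f ` Omega a b))"

definition norm3inf :: "real \<Rightarrow> real \<Rightarrow> (real \<times> real \<Rightarrow> real) \<Rightarrow> real" where
  "norm3inf a b f = Sup ((\<lambda>(w, p). \<bar>pd w f p\<bar>) ` ({w. length w \<le> 3} \<times> Omega a b))"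

definition is_grid :: "real \<Rightarrow> nat \<Rightarrow> (nat \<Rightarrow> real) \<Rightarrow> bool" where
  "is_grid a n x \<longleftrightarrow> n \<ge> 1 \<and> x 0 = 0 \<and> x n = a \<and> (\<forall>i<n. x i < x (Suc i))"

text \<open>mid x i = x_{i+1/2}, hh x i = h_{i+1/2}, hc x i = h_i (for i \<ge> 1),
  hmax n x = h = max_i h_{i+1/2}.\<close>
definition mid :: "(nat \<Rightarrow> real) \<Rightarrow> nat \<Rightarrow> real" where
  "mid x i = (x i + x (Suc i)) / 2"

definition hh :: "(nat \<Rightarrow> real) \<Rightarrow> nat \<Rightarrow> real" where
  "hh x i = x (Suc i) - x i"

definition hc :: "(nat \<Rightarrow> real) \<Rightarrow> nat \<Rightarrow> real" where
  "hc x i = (hh x (i - 1) + hh x i) / 2"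

definition hmax :: "nat \<Rightarrow> (nat \<Rightarrow> real) \<Rightarrow> real" where
  "hmax n x = Max (hh x ` {..<n})"

definition sigma_tilde ::
  "(real \<times> real \<Rightarrow> real) \<Rightarrow> (nat \<Rightarrow> real) \<Rightarrow> (nat \<Rightarrow> real) \<Rightarrow> nat \<Rightarrow> nat \<Rightarrow> real" where
  "sigma_tilde s x y i j =
     s (mid x i, mid y j)
     - (hh x i)\<^sup>2 / 8 * pd [Dx, Dx] s (mid x i, mid y j)
     - (hh y j)\<^sup>2 / 8 * pd [Dy, Dy] s (mid x i, mid y j)"

definition Dx_tilde ::
  "(real \<times> real \<Rightarrow> real) \<Rightarrow> (nat \<Rightarrow> real) \<Rightarrow> (nat \<Rightarrow> real) \<Rightarrow> nat \<Rightarrow> nat \<Rightarrow> real" where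
  "Dx_tilde s x y i j = (sigma_tilde s x y i j - sigma_tilde s x y (i - 1) j) / hc x i"

definition Dy_tilde ::
  "(real \<times> real \<Rightarrow> real) \<Rightarrow> (nat \<Rightarrow> real) \<Rightarrow> (nat \<Rightarrow> real) \<Rightarrow> nat \<Rightarrow> nat \<Rightarrow> real" where
  "Dy_tilde s x y i j = (sigma_tilde s x y i j - sigma_tilde s x y i (j - 1)) / hc y j"

end

theory Submission
  imports Defs
begin

lemma taylor3:
  fixes f f1 f2 f3 :: "real \<Rightarrow> real"
  assumes d1: "\<And>t. lo < t \<Longrightarrow> t < hi \<Longrightarrow> (f has_real_derivative f1 t) (at t)"
    and d2: "\<And>t. lo < t \<Longrightarrow> t < hi \<Longrightarrow> (f1 has_real_derivative f2 t) (at t)"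
    and d3: "\<And>t. lo < t \<Longrightarrow> t < hi \<Longrightarrow> (f2 has_real_derivative f3 t) (at t)"
    and bd: "\<And>t. lo < t \<Longrightarrow> t < hi \<Longrightarrow> \<bar>f3 t\<bar> \<le> M"
    and x0: "lo < x0" "x0 < hi" and z: "lo < z" "z < hi"
  shows "\<bar>f z - f x0 - (z - x0) * f1 x0 - (z - x0)^2/2 * f2 x0\<bar> \<le> M * \<bar>z - x0\<bar>^3 / 6"
proof (cases "z = x0")
  case True then show ?thesis by simp
next
  case False
  define diff where "diff m = (if m = 0 then f else if m = 1 then f1 else if m = 2 then f2 else f3)" for m :: nat
  have "\<exists>t. (if z < x0 then z < t \<and> t < x0 else x0 < t \<and> t < z) \<and>
    f z = (\<Sum>m<3. (diff m x0 / fact m) * (z - x0)^m) + (diff 3 t / fact 3) * (z - x0)^3"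
  proof (rule Taylor[where a="min z x0" and b="max z x0"])
    show "\<forall>m t. m < 3 \<and> min z x0 \<le> t \<and> t \<le> max z x0 \<longrightarrow> DERIV (diff m) t :> diff (Suc m) t"
    proof (intro allI impI)
      fix m t assume h: "m < (3::nat) \<and> min z x0 \<le> t \<and> t \<le> max z x0"
      then have t: "lo < t" "t < hi" using x0 z by auto
      from h have "m = 0 \<or> m = 1 \<or> m = 2" by auto
      then show "DERIV (diff m) t :> diff (Suc m) t"
        using d1[OF t] d2[OF t] d3[OF t] by (auto simp: diff_def)
    qed
  qed (use False in \<open>auto simp: diff_def\<close>)
  then obtain t where t: "(if z < x0 then z < t \<and> t < x0 else x0 < t \<and> t < z)"
    and eq: "f z = (\<Sum>m<3. (diff m x0 / fact m) * (z - x0)^m) + (diff 3 t / fact 3) * (z - x0)^3"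
    by blast
  have tt: "lo < t" "t < hi" using t x0 z by (auto split: if_splits)
  have "f z - f x0 - (z - x0) * f1 x0 - (z - x0)^2/2 * f2 x0 = f3 t / 6 * (z - x0)^3"
    using eq by (simp add: diff_def eval_nat_numeral fact_numeral)
  moreover have "\<bar>f3 t / 6 * (z - x0)^3\<bar> \<le> M * \<bar>z - x0\<bar>^3 / 6"
    using bd[OF tt] by (simp add: abs_mult power_abs mult_right_mono)
  ultimately show ?thesis by (simp only:)
qed

lemma taylor1:
  fixes f2 f3 :: "real \<Rightarrow> real"
  assumes d3: "\<And>t. lo < t \<Longrightarrow> t < hi \<Longrightarrow> (f2 has_real_derivative f3 t) (at t)"
    and bd: "\<And>t. lo < t \<Longrightarrow> t < hi \<Longrightarrow> \<bar>f3 t\<bar> \<le> M"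
    and x0: "lo < x0" "x0 < hi" and z: "lo < z" "z < hi"
  shows "\<bar>f2 z - f2 x0\<bar> \<le> M * \<bar>z - x0\<bar>"
proof (cases "z = x0")
  case True then show ?thesis by simp
next
  case False
  define diff where "diff m = (if m = 0 then f2 else f3)" for m :: nat
  have "\<exists>t. (if z < x0 then z < t \<and> t < x0 else x0 < t \<and> t < z) \<and>
    f2 z = (\<Sum>m<1. (diff m x0 / fact m) * (z - x0)^m) + (diff 1 t / fact 1) * (z - x0)^1"
  proof (rule Taylor[where a="min z x0" and b="max z x0"])
    show "\<forall>m t. m < 1 \<and> min z x0 \<le> t \<and> t \<le> max z x0 \<longrightarrow> DERIV (diff m) t :> diff (Suc m) t"
    proof (intro allI impI)
      fix m t assume h: "m < (1::nat) \<and> min z x0 \<le> t \<and> t \<le> max z x0"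
      then have t: "lo < t" "t < hi" using x0 z by auto
      from h have "m = 0" by auto
      then show "DERIV (diff m) t :> diff (Suc m) t"
        using d3[OF t] by (auto simp: diff_def)
    qed
  qed (use False in \<open>auto simp: diff_def\<close>)
  then obtain t where t: "(if z < x0 then z < t \<and> t < x0 else x0 < t \<and> t < z)"
    and eq: "f2 z = (\<Sum>m<1. (diff m x0 / fact m) * (z - x0)^m) + (diff 1 t / fact 1) * (z - x0)^1"
    by blast
  have tt: "lo < t" "t < hi" using t x0 z by (auto split: if_splits)
  have "f2 z - f2 x0 = f3 t * (z - x0)"
    using eq by (simp add: diff_def)
  moreover have "\<bar>f3 t * (z - x0)\<bar> \<le> M * \<bar>z - x0\<bar>"
    using bd[OF tt] by (simp add: abs_mult mult_right_mono)
  ultimately show ?thesis by simp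
qed

lemma core:
  fixes f fA fB fC g gA :: "real \<Rightarrow> real"
  assumes d1: "\<And>t. lo < t \<Longrightarrow> t < hi \<Longrightarrow> (f has_real_derivative fA t) (at t)"
    and d2: "\<And>t. lo < t \<Longrightarrow> t < hi \<Longrightarrow> (fA has_real_derivative fB t) (at t)"
    and d3: "\<And>t. lo < t \<Longrightarrow> t < hi \<Longrightarrow> (fB has_real_derivative fC t) (at t)"
    and bd: "\<And>t. lo < t \<Longrightarrow> t < hi \<Longrightarrow> \<bar>fC t\<bar> \<le> M"
    and dg: "\<And>t. lo < t \<Longrightarrow> t < hi \<Longrightarrow> (g has_real_derivative gA t) (at t)"
    and bdg: "\<And>t. lo < t \<Longrightarrow> t < hi \<Longrightarrow> \<bar>gA t\<bar> \<le> M"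
    and pts: "lo \<le> xm" "xm < xi" "xi < xp" "xp \<le> hi"
    and hs: "xi - xm \<le> h" "xp - xi \<le> h" and A: "0 \<le> A" "A \<le> l^2/8"
  shows "\<bar>fA xi - ((f ((xi+xp)/2) - (xp-xi)^2/8 * fB ((xi+xp)/2) - A * g ((xi+xp)/2))
              - (f ((xm+xi)/2) - (xi-xm)^2/8 * fB ((xm+xi)/2) - A * g ((xm+xi)/2)))
              / (((xi-xm)+(xp-xi))/2)\<bar> \<le> 1 * (h^2 + l^2) * M"
proof -
  define p where "p = (xi - xm)/2"
  define q where "q = (xp - xi)/2"
  have p: "0 < p" and q: "0 < q" using pts by (auto simp: p_def q_def)
  have v: "(xi+xp)/2 = xi + q" and u: "(xm+xi)/2 = xi - p" by (auto simp: p_def q_def field_simps)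
  have ii: "lo < xi" "xi < hi" using pts by auto
  have iv: "lo < xi + q" "xi + q < hi" using pts by (auto simp: q_def field_simps)
  have iu: "lo < xi - p" "xi - p < hi" using pts by (auto simp: p_def field_simps)
  have M0: "0 \<le> M" using bd[OF ii] by linarith
  define R1 where "R1 = f (xi+q) - f xi - q * fA xi - q^2/2 * fB xi"
  define R2 where "R2 = fB (xi+q) - fB xi"
  define R3 where "R3 = f (xi-p) - f xi + p * fA xi - p^2/2 * fB xi"
  define R4 where "R4 = fB (xi-p) - fB xi"
  define G where "G = g (xi+q) - g (xi-p)"
  have b1: "\<bar>R1\<bar> \<le> M * q^3/6"
    using taylor3[OF d1 d2 d3 bd ii iv] q by (simp add: R1_def)
  have b3: "\<bar>R3\<bar> \<le> M * p^3/6"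
    using taylor3[OF d1 d2 d3 bd ii iu] p by (simp add: R3_def)
  have b2: "\<bar>R2\<bar> \<le> M * q"
    using taylor1[OF d3 bd ii iv] q by (simp add: R2_def)
  have b4: "\<bar>R4\<bar> \<le> M * p"
    using taylor1[OF d3 bd ii iu] p by (simp add: R4_def)
  have bG: "\<bar>G\<bar> \<le> M * (p+q)"
    using taylor1[OF dg bdg iu iv] p q by (simp add: G_def add.commute)
  define E where "E = R1 - q^2/2 * R2 - R3 + p^2/2 * R4 - A * G"
  have xp: "xp - xi = 2*q" and xm: "xi - xm = 2*p" by (auto simp: p_def q_def)
  have num: "(f (xi + q) - (2*q)^2/8 * fB (xi + q) - A * g (xi + q))
              - (f (xi - p) - (2*p)^2/8 * fB (xi - p) - A * g (xi - p)) = (p+q) * fA xi + E"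
    by (simp add: E_def R1_def R2_def R3_def R4_def G_def power2_eq_square field_simps)
  have den: "((2*p)+(2*q))/2 = p+q" by simp
  have lhs: "fA xi - ((p+q) * fA xi + E) / (p+q) = - E / (p+q)"
    using p q by (simp add: field_simps)
  have e1: "\<bar>q^2/2 * R2\<bar> \<le> M * q^3/2"
  proof -
    have "\<bar>q^2/2 * R2\<bar> = q^2/2 * \<bar>R2\<bar>" by (simp add: abs_mult)
    also have "\<dots> \<le> q^2/2 * (M*q)" using b2 by (intro mult_left_mono) auto
    finally show ?thesis by (simp add: power3_eq_cube power2_eq_square mult_ac)
  qed
  have e2: "\<bar>p^2/2 * R4\<bar> \<le> M * p^3/2"
  proof -
    have "\<bar>p^2/2 * R4\<bar> = p^2/2 * \<bar>R4\<bar>" by (simp add: abs_mult)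
    also have "\<dots> \<le> p^2/2 * (M*p)" using b4 by (intro mult_left_mono) auto
    finally show ?thesis by (simp add: power3_eq_cube power2_eq_square mult_ac)
  qed
  have e3: "\<bar>A * G\<bar> \<le> A * (M * (p+q))"
    using bG A by (simp add: abs_mult mult_left_mono)
  have tri: "\<bar>a - b - c + d - e\<bar> \<le> \<bar>a\<bar> + \<bar>b\<bar> + \<bar>c\<bar> + \<bar>d\<bar> + \<bar>e\<bar>" for a b c d e :: real
    by arith
  have eb0: "\<bar>E\<bar> \<le> M * q^3/6 + M * q^3/2 + M * p^3/6 + M * p^3/2 + A * (M * (p+q))"
    unfolding E_def using tri[of R1 "q^2/2 * R2" R3 "p^2/2 * R4" "A * G"] b1 b3 e1 e2 e3 by linarith
  have "M * q^3/6 + M * q^3/2 + M * p^3/6 + M * p^3/2 = 2/3 * M * (p^3 + q^3)"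
    by (simp add: algebra_simps)
  then have eb: "\<bar>E\<bar> \<le> 2/3 * M * (p^3 + q^3) + A * (M * (p+q))" using eb0 by linarith
  have pq3: "p^3 + q^3 \<le> (p+q) * (h^2/2)"
  proof -
    have "p^3 + q^3 \<le> (p+q) * (p^2+q^2)" using p q
      by (simp add: power3_eq_cube power2_eq_square algebra_simps)
    moreover have "p^2 \<le> h^2/4" "q^2 \<le> h^2/4"
    proof -
      have "p \<le> h/2" "q \<le> h/2" using hs by (auto simp: p_def q_def)
      then have "p^2 \<le> (h/2)^2" "q^2 \<le> (h/2)^2" using p q
        by (auto intro!: power_mono)
      then show "p^2 \<le> h^2/4" "q^2 \<le> h^2/4" by (auto simp: power_divide)
    qed
    moreover have "(p+q) * (p^2+q^2) \<le> (p+q) * (h^2/2)"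
      using calculation(2,3) p q by (intro mult_left_mono) auto
    ultimately show ?thesis by linarith
  qed
  have k1: "2/3 * M * (p^3 + q^3) \<le> (p+q) * (M * h^2)"
  proof -
    have "2/3 * M * (p^3 + q^3) \<le> 2/3 * M * ((p+q) * (h^2/2))"
      using pq3 M0 by (intro mult_left_mono) auto
    also have "\<dots> = (1/3) * ((p+q) * (M * h^2))" by (simp add: algebra_simps)
    also have "\<dots> \<le> (p+q) * (M * h^2)" using M0 p q by simp
    finally show ?thesis .
  qed
  have k2: "A * (M * (p+q)) \<le> (p+q) * (M * l^2)"
  proof -
    have "A * (M * (p+q)) \<le> (l^2/8) * (M * (p+q))" using A M0 p q by (intro mult_right_mono) auto
    also have "\<dots> \<le> (p+q) * (M * l^2)" using M0 p q by (simp add: algebra_simps)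
    finally show ?thesis .
  qed
  have "\<bar>E\<bar> \<le> (p+q) * ((h^2 + l^2) * M)" using eb k1 k2 by (simp add: algebra_simps)
  then have "\<bar>E\<bar> / (p+q) \<le> (h^2 + l^2) * M" using p q by (simp add: field_simps)
  then show ?thesis
    unfolding v u xp xm den num lhs using p q by (simp add: abs_minus_commute)
qed

lemma pdx_deriv:
  assumes "pd w s differentiable (at (t, y0))"
  shows "((\<lambda>t. pd w s (t, y0)) has_real_derivative pd (Dx # w) s (t, y0)) (at t)"
proof -
  have i: "(\<lambda>t::real. (t, y0)) differentiable (at t)"
    by (auto intro!: derivative_intros simp: differentiable_def)
  have a2: "pd w s differentiable (at ((\<lambda>t. (t, y0)) t))" using assms by simp
  have "(pd w s \<circ> (\<lambda>t. (t, y0))) differentiable (at t)"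
    by (rule differentiable_chain_at[OF i a2])
  then have "(\<lambda>t. pd w s (t, y0)) differentiable (at t)" by (simp add: o_def)
  then show ?thesis
    using DERIV_deriv_iff_real_differentiable by (simp add: pdx_def)
qed

lemma pdy_deriv:
  assumes "pd w s differentiable (at (x0, t))"
  shows "((\<lambda>t. pd w s (x0, t)) has_real_derivative pd (Dy # w) s (x0, t)) (at t)"
proof -
  have i: "(\<lambda>t::real. (x0, t)) differentiable (at t)"
    by (auto intro!: derivative_intros simp: differentiable_def)
  have a2: "pd w s differentiable (at ((\<lambda>t. (x0, t)) t))" using assms by simp
  have "(pd w s \<circ> (\<lambda>t. (x0, t))) differentiable (at t)"
    by (rule differentiable_chain_at[OF i a2])
  then have "(\<lambda>t. pd w s (x0, t)) differentiable (at t)" by (simp add: o_def)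
  then show ?thesis
    using DERIV_deriv_iff_real_differentiable by (simp add: pdy_def)
qed

lemma finite_words: "finite {w :: dir list. length w \<le> n}"
proof -
  have "UNIV = {Dx, Dy}" using dir.exhaust by auto
  then have "finite (UNIV :: dir set)" by (metis finite.emptyI finite.insertI)
  then have "finite {xs :: dir list. set xs \<subseteq> UNIV \<and> length xs \<le> n}"
    by (rule finite_lists_length_le)
  then show ?thesis by simp
qed

lemma norm_bound:
  assumes sm: "smooth3 a b s" and p: "p \<in> Omega a b" and w: "length w \<le> 3"
  shows "\<bar>pd w s p\<bar> \<le> norm3inf a b s"
proof -
  let ?W = "{w :: dir list. length w \<le> 3}"
  have eq: "(\<lambda>(w, p). \<bar>pd w s p\<bar>) ` (?W \<times> Omega a b) = (\<Union>w\<in>?W. (\<lambda>p. \<bar>pd w s p\<bar>) ` Omega a b)"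
    by auto
  have "bdd_above ((\<lambda>p. \<bar>pd w s p\<bar>) ` Omega a b)" if "w \<in> ?W" for w
  proof -
    have "bounded (pd w s ` Omega a b)" using sm that by (auto simp: smooth3_def)
    then obtain B where "\<forall>z\<in>pd w s ` Omega a b. norm z \<le> B" by (auto simp: bounded_iff)
    then show ?thesis by (auto simp: bdd_above_def)
  qed
  then have "bdd_above ((\<lambda>(w, p). \<bar>pd w s p\<bar>) ` (?W \<times> Omega a b))"
    unfolding eq using finite_words by simp
  moreover have "\<bar>pd w s p\<bar> \<in> (\<lambda>(w, p). \<bar>pd w s p\<bar>) ` (?W \<times> Omega a b)"
    using p w by force
  ultimately have "\<bar>pd w s p\<bar> \<le> Sup ((\<lambda>(w, p). \<bar>pd w s p\<bar>) ` (?W \<times> Omega a b))"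
    by (intro cSup_upper)
  then show ?thesis unfolding norm3inf_def .
qed

lemma grid_mono: "is_grid a n x \<Longrightarrow> j \<le> n \<Longrightarrow> i < j \<Longrightarrow> x i < x j"
proof (induction j)
  case 0 then show ?case by simp
next
  case (Suc j)
  have s: "x j < x (Suc j)" using Suc.prems by (auto simp: is_grid_def)
  show ?case
  proof (cases "i = j")
    case True then show ?thesis using s by simp
  next
    case False then show ?thesis using Suc s by auto
  qed
qed

lemma grid_range: assumes g: "is_grid a n x" and k: "k < n" shows "0 \<le> x k" "x (Suc k) \<le> a"
proof -
  have "x 0 \<le> x k" using grid_mono[OF g, of k 0] k by (cases k) auto
  then show "0 \<le> x k" using g by (simp add: is_grid_def)
  have "x (Suc k) \<le> x n" using grid_mono[OF g, of n "Suc k"] k by (cases "Suc k = n") auto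
  then show "x (Suc k) \<le> a" using g by (simp add: is_grid_def)
qed

lemma grid_mid: assumes g: "is_grid a n x" and k: "k < n" shows "0 < mid x k" "mid x k < a"
  using grid_range[OF g k] g k by (auto simp: mid_def is_grid_def)

lemma hh_le: assumes "k < n" shows "hh x k \<le> hmax n x"
  unfolding hmax_def using assms by (intro Max_ge) auto

theorem lemma4p1:
  "\<exists>C::real. \<forall>(a::real) (b::real) nx ny x y s11 s22.
     0 < a \<and> 0 < b \<and> is_grid a nx x \<and> is_grid b ny y \<and>
     smooth3 a b s11 \<and> smooth3 a b s22 \<longrightarrow>
     (\<forall>i j. 1 \<le> i \<and> i \<le> nx - 1 \<and> j \<le> ny - 1 \<longrightarrow>
        \<bar>pd [Dx] s11 (x i, mid y j) - Dx_tilde s11 x y i j\<bar>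
          \<le> C * ((hmax nx x)\<^sup>2 + (hmax ny y)\<^sup>2) * norm3inf a b s11) \<and>
     (\<forall>i j. i \<le> nx - 1 \<and> 1 \<le> j \<and> j \<le> ny - 1 \<longrightarrow>
        \<bar>pd [Dy] s22 (mid x i, y j) - Dy_tilde s22 x y i j\<bar>
          \<le> C * ((hmax nx x)\<^sup>2 + (hmax ny y)\<^sup>2) * norm3inf a b s22)"
proof (intro exI[of _ 1] allI impI conjI)
  fix a b :: real and nx ny :: nat and x y :: "nat \<Rightarrow> real" and s11 s22
  assume H: "0 < a \<and> 0 < b \<and> is_grid a nx x \<and> is_grid b ny y \<and> smooth3 a b s11 \<and> smooth3 a b s22"
  then have gx: "is_grid a nx x" and gy: "is_grid b ny y" and sm1: "smooth3 a b s11"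
    and sm2: "smooth3 a b s22" by auto
  have nx: "1 \<le> nx" and ny: "1 \<le> ny" using gx gy by (auto simp: is_grid_def)
  show "\<bar>pd [Dx] s11 (x i, mid y j) - Dx_tilde s11 x y i j\<bar>
          \<le> 1 * ((hmax nx x)\<^sup>2 + (hmax ny y)\<^sup>2) * norm3inf a b s11"
    if ij: "1 \<le> i \<and> i \<le> nx - 1 \<and> j \<le> ny - 1" for i j
  proof -
    let ?s = s11
    define y0 where "y0 = mid y j"
    have j: "j < ny" using ij ny by auto
    have i: "i < nx" "i - 1 < nx" "Suc (i - 1) = i" using ij nx by auto
    have y0: "0 < y0" "y0 < b" using grid_mid[OF gy j] by (auto simp: y0_def)
    have inO: "(t, y0) \<in> Omega a b" if "0 < t" "t < a" for t
      using that y0 by (simp add: Omega_def)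
    have dif: "pd w ?s differentiable (at (t, y0))" if "length w \<le> 2" "0 < t" "t < a" for w t
      using sm1 inO[OF that(2,3)] that(1) by (auto simp: smooth3_def)
    have D: "((\<lambda>t. pd w ?s (t, y0)) has_real_derivative pd (Dx # w) ?s (t, y0)) (at t)"
      if "length w \<le> 2" "0 < t" "t < a" for w t
      using pdx_deriv[OF dif[OF that]] .
    have B: "\<bar>pd w ?s (t, y0)\<bar> \<le> norm3inf a b ?s" if "length w \<le> 3" "0 < t" "t < a" for w t
      using norm_bound[OF sm1 inO[OF that(2,3)] that(1)] .
    have i_lt: "x (i - 1) < x (Suc (i - 1))" using gx i(2) by (auto simp: is_grid_def)
    have pts: "0 \<le> x (i - 1)" "x (i - 1) < x i" "x i < x (Suc i)" "x (Suc i) \<le> a"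
      using grid_range[OF gx i(2)] grid_range[OF gx i(1)] i gx
        i_lt[unfolded i(3)] by (auto simp: is_grid_def)
    have hs: "x i - x (i - 1) \<le> hmax nx x" "x (Suc i) - x i \<le> hmax nx x"
      using hh_le[OF i(2), of x] hh_le[OF i(1), of x] i by (auto simp: hh_def)
    have A: "0 \<le> (hh y j)^2/8" "(hh y j)^2/8 \<le> (hmax ny y)^2/8"
      using hh_le[OF j, of y] grid_range[OF gy j] gy j
      by (auto simp: hh_def is_grid_def intro!: power_mono)
    have D1: "\<And>t. 0 < t \<Longrightarrow> t < a \<Longrightarrow> ((\<lambda>t. pd [] ?s (t, y0)) has_real_derivative pd [Dx] ?s (t, y0)) (at t)"
      by (rule D) auto
    have D2: "\<And>t. 0 < t \<Longrightarrow> t < a \<Longrightarrow> ((\<lambda>t. pd [Dx] ?s (t, y0)) has_real_derivative pd [Dx, Dx] ?s (t, y0)) (at t)"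
      by (rule D) auto
    have D3: "\<And>t. 0 < t \<Longrightarrow> t < a \<Longrightarrow> ((\<lambda>t. pd [Dx, Dx] ?s (t, y0)) has_real_derivative pd [Dx, Dx, Dx] ?s (t, y0)) (at t)"
      by (rule D) auto
    have DG: "\<And>t. 0 < t \<Longrightarrow> t < a \<Longrightarrow> ((\<lambda>t. pd [Dy, Dy] ?s (t, y0)) has_real_derivative pd [Dx, Dy, Dy] ?s (t, y0)) (at t)"
      by (rule D) auto
    have B3: "\<And>t. 0 < t \<Longrightarrow> t < a \<Longrightarrow> \<bar>pd [Dx, Dx, Dx] ?s (t, y0)\<bar> \<le> norm3inf a b ?s"
      by (rule B) auto
    have BG: "\<And>t. 0 < t \<Longrightarrow> t < a \<Longrightarrow> \<bar>pd [Dx, Dy, Dy] ?s (t, y0)\<bar> \<le> norm3inf a b ?s"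
      by (rule B) auto
    note c = core[where f="\<lambda>t. pd [] ?s (t, y0)" and fA="\<lambda>t. pd [Dx] ?s (t, y0)"
        and fB="\<lambda>t. pd [Dx, Dx] ?s (t, y0)" and fC="\<lambda>t. pd [Dx, Dx, Dx] ?s (t, y0)"
        and g="\<lambda>t. pd [Dy, Dy] ?s (t, y0)" and gA="\<lambda>t. pd [Dx, Dy, Dy] ?s (t, y0)"
        and lo=0 and hi=a and M="norm3inf a b ?s", OF D1 D2 D3 B3 DG BG pts hs A]
    show ?thesis using c i(3)
      by (simp add: Dx_tilde_def sigma_tilde_def mid_def hh_def hc_def y0_def)
  qed
  show "\<bar>pd [Dy] s22 (mid x i, y j) - Dy_tilde s22 x y i j\<bar>
          \<le> 1 * ((hmax nx x)\<^sup>2 + (hmax ny y)\<^sup>2) * norm3inf a b s22"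
    if ij: "i \<le> nx - 1 \<and> 1 \<le> j \<and> j \<le> ny - 1" for i j
  proof -
    let ?s = s22
    define x0 where "x0 = mid x i"
    have i: "i < nx" using ij nx by auto
    have j: "j < ny" "j - 1 < ny" "Suc (j - 1) = j" using ij ny by auto
    have x0: "0 < x0" "x0 < a" using grid_mid[OF gx i] by (auto simp: x0_def)
    have inO: "(x0, t) \<in> Omega a b" if "0 < t" "t < b" for t
      using that x0 by (simp add: Omega_def)
    have dif: "pd w ?s differentiable (at (x0, t))" if "length w \<le> 2" "0 < t" "t < b" for w t
      using sm2 inO[OF that(2,3)] that(1) by (auto simp: smooth3_def)
    have D: "((\<lambda>t. pd w ?s (x0, t)) has_real_derivative pd (Dy # w) ?s (x0, t)) (at t)"
      if "length w \<le> 2" "0 < t" "t < b" for w t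
      using pdy_deriv[OF dif[OF that]] .
    have B: "\<bar>pd w ?s (x0, t)\<bar> \<le> norm3inf a b ?s" if "length w \<le> 3" "0 < t" "t < b" for w t
      using norm_bound[OF sm2 inO[OF that(2,3)] that(1)] .
    have j_lt: "y (j - 1) < y (Suc (j - 1))" using gy j(2) by (auto simp: is_grid_def)
    have pts: "0 \<le> y (j - 1)" "y (j - 1) < y j" "y j < y (Suc j)" "y (Suc j) \<le> b"
      using grid_range[OF gy j(2)] grid_range[OF gy j(1)] j gy
        j_lt[unfolded j(3)] by (auto simp: is_grid_def)
    have hs: "y j - y (j - 1) \<le> hmax ny y" "y (Suc j) - y j \<le> hmax ny y"
      using hh_le[OF j(2), of y] hh_le[OF j(1), of y] j by (auto simp: hh_def)
    have A: "0 \<le> (hh x i)^2/8" "(hh x i)^2/8 \<le> (hmax nx x)^2/8"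
      using hh_le[OF i, of x] grid_range[OF gx i] gx i
      by (auto simp: hh_def is_grid_def intro!: power_mono)
    have D1: "\<And>t. 0 < t \<Longrightarrow> t < b \<Longrightarrow> ((\<lambda>t. pd [] ?s (x0, t)) has_real_derivative pd [Dy] ?s (x0, t)) (at t)"
      by (rule D) auto
    have D2: "\<And>t. 0 < t \<Longrightarrow> t < b \<Longrightarrow> ((\<lambda>t. pd [Dy] ?s (x0, t)) has_real_derivative pd [Dy, Dy] ?s (x0, t)) (at t)"
      by (rule D) auto
    have D3: "\<And>t. 0 < t \<Longrightarrow> t < b \<Longrightarrow> ((\<lambda>t. pd [Dy, Dy] ?s (x0, t)) has_real_derivative pd [Dy, Dy, Dy] ?s (x0, t)) (at t)"
      by (rule D) auto
    have DG: "\<And>t. 0 < t \<Longrightarrow> t < b \<Longrightarrow> ((\<lambda>t. pd [Dx, Dx] ?s (x0, t)) has_real_derivative pd [Dy, Dx, Dx] ?s (x0, t)) (at t)"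
      by (rule D) auto
    have B3: "\<And>t. 0 < t \<Longrightarrow> t < b \<Longrightarrow> \<bar>pd [Dy, Dy, Dy] ?s (x0, t)\<bar> \<le> norm3inf a b ?s"
      by (rule B) auto
    have BG: "\<And>t. 0 < t \<Longrightarrow> t < b \<Longrightarrow> \<bar>pd [Dy, Dx, Dx] ?s (x0, t)\<bar> \<le> norm3inf a b ?s"
      by (rule B) auto
    note c = core[where f="\<lambda>t. pd [] ?s (x0, t)" and fA="\<lambda>t. pd [Dy] ?s (x0, t)"
        and fB="\<lambda>t. pd [Dy, Dy] ?s (x0, t)" and fC="\<lambda>t. pd [Dy, Dy, Dy] ?s (x0, t)"
        and g="\<lambda>t. pd [Dx, Dx] ?s (x0, t)" and gA="\<lambda>t. pd [Dy, Dx, Dx] ?s (x0, t)"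
        and lo=0 and hi=b and M="norm3inf a b ?s", OF D1 D2 D3 B3 DG BG pts hs A]
    have e: "a1 - b1 - c1 = a1 - c1 - b1" for a1 b1 c1 :: real by simp
    show ?thesis using c j(3)
      by (simp add: Dy_tilde_def sigma_tilde_def mid_def hh_def hc_def x0_def e add.commute)
  qed
qed

end
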